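(* Let $\mathbf A$ be a finite relational structure that has a $(k+1)$-ary near-unanimity polymorphism for some $k\ge 2$. Then $\mathrm{CSP}(\mathbf A)$ and $\exists\mathrm{CSP}(\mathbf A)$ are sublinear-query testable with one-sided error.
   Context: A $(k+1)$-ary near-unanimity operation $n$ on $A$ satisfies $n(b,a,\dots,a)=n(a,b,a,\dots,a)=\dots=n(a,\dots,a,b)=a$ for all $a,b$; polymorphism of $\mathbf A$ means it preserves every relation of $\mathbf A$ (coordinatewise application to tuples of the relation stays in the relation). $\mathrm{CSP}(\mathbf A)$: instances $(V,\mathcal C,w)$ with constraints from relations of $\mathbf A$ and weights $w:V\to[0,1]$ summing to 1. $\exists\mathrm{CSP}(\mathbf A)$: instances $(V,V^\exists,\mathcal C,w)$ also allowing existentially quantified variables $V^\exists$ in constraints, weights on free variables $V$; $f:V\to A$ is satisfying iff it extends to a satisfying assignment of all variables. $f$ is $\epsilon$-far if its weighted distance to every satisfying assignment exceeds $\epsilon$. An $\epsilon$-tester gets instance and $\epsilon$, queries $f$, accepts satisfying $f$ with probability $\ge2/3$ and rejects $\epsilon$-far $f$ with probability $\ge 2/3$; one-sided error means satisfying $f$ are always accepted. Sublinear-query testable: for every $\epsilon\in(0,1)$ there is an $\epsilon$-tester making $o(n)$ queries, $n=|V|$. *)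

theory Defs
  imports "HOL-Probability.Probability" "HOL-Library.Landau_Symbols"
begin

definition rel_structure :: "(nat \<times> 'a list set) set \<Rightarrow> bool" where
  "rel_structure Rels \<longleftrightarrow> finite Rels \<and> (\<forall>(m, R) \<in> Rels. \<forall>t \<in> R. length t = m)"

text \<open>A (k+1)-ary operation is a function on argument lists of length k+1.\<close>

definition near_unanimity :: "nat \<Rightarrow> ('a list \<Rightarrow> 'a) \<Rightarrow> bool" where
  "near_unanimity k nu \<longleftrightarrow>
     (\<forall>a b i. i \<le> k \<longrightarrow> nu ((replicate (Suc k) a)[i := b]) = a)"

definition polymorphism :: "nat \<Rightarrow> ('a list \<Rightarrow> 'a) \<Rightarrow> (nat \<times> 'a list set) set \<Rightarrow> bool" where
  "polymorphism k nu Rels \<longleftrightarrow>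
     (\<forall>(m, R) \<in> Rels. \<forall>ts. length ts = Suc k \<and> set ts \<subseteq> R \<longrightarrow>
        map (\<lambda>j. nu (map (\<lambda>t. t ! j) ts)) [0..<m] \<in> R)"

text \<open>An instance of ExCSP(A): free variables V, existentially quantified variables Vex,
  constraints C (pairs of a scope and a relation of A), weights w on V.\<close>

definition ecsp_instance ::
  "(nat \<times> 'a list set) set \<Rightarrow> 'v set \<Rightarrow> 'v set \<Rightarrow> ('v list \<times> 'a list set) set \<Rightarrow> ('v \<Rightarrow> real) \<Rightarrow> bool" where
  "ecsp_instance Rels V Vex C w \<longleftrightarrow>
     finite V \<and> finite Vex \<and> V \<inter> Vex = {} \<and> finite C \<and>
     (\<forall>(s, R) \<in> C. (length s, R) \<in> Rels \<and> set s \<subseteq> V \<union> Vex) \<and>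
     (\<forall>v \<in> V. 0 \<le> w v \<and> w v \<le> 1) \<and> (\<Sum>v\<in>V. w v) = 1"

definition csp_instance ::
  "(nat \<times> 'a list set) set \<Rightarrow> 'v set \<Rightarrow> ('v list \<times> 'a list set) set \<Rightarrow> ('v \<Rightarrow> real) \<Rightarrow> bool" where
  "csp_instance Rels V C w \<longleftrightarrow> ecsp_instance Rels V {} C w"

definition satisfying :: "'v set \<Rightarrow> ('v list \<times> 'a list set) set \<Rightarrow> ('v \<Rightarrow> 'a) \<Rightarrow> bool" where
  "satisfying V C f \<longleftrightarrow> (\<exists>g. (\<forall>v \<in> V. g v = f v) \<and> (\<forall>(s, R) \<in> C. map g s \<in> R))"

definition wdist :: "'v set \<Rightarrow> ('v \<Rightarrow> real) \<Rightarrow> ('v \<Rightarrow> 'a) \<Rightarrow> ('v \<Rightarrow> 'a) \<Rightarrow> real" where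
  "wdist V w f g = (\<Sum>v \<in> {v \<in> V. f v \<noteq> g v}. w v)"

definition eps_far ::
  "'v set \<Rightarrow> ('v list \<times> 'a list set) set \<Rightarrow> ('v \<Rightarrow> real) \<Rightarrow> real \<Rightarrow> ('v \<Rightarrow> 'a) \<Rightarrow> bool" where
  "eps_far V C w eps f \<longleftrightarrow> (\<forall>g. satisfying V C g \<longrightarrow> wdist V w f g > eps)"

text \<open>A deterministic adaptive query algorithm is a decision tree: it either halts with
  a verdict (True = accept) or queries the value of a variable and continues depending
  on the answer. A randomized algorithm is a probability distribution over such trees.\<close>

datatype ('v, 'a) qtree = Leaf bool | Query 'v "'a \<Rightarrow> ('v, 'a) qtree"

primrec accepts :: "('v, 'a) qtree \<Rightarrow> ('v \<Rightarrow> 'a) \<Rightarrow> bool" where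
  "accepts (Leaf b) f = b"
| "accepts (Query v t) f = accepts (t (f v)) f"

primrec num_queries :: "('v, 'a) qtree \<Rightarrow> ('v \<Rightarrow> 'a) \<Rightarrow> nat" where
  "num_queries (Leaf b) f = 0"
| "num_queries (Query v t) f = Suc (num_queries (t (f v)) f)"

definition one_sided_tester ::
  "'v set \<Rightarrow> ('v list \<times> 'a list set) set \<Rightarrow> ('v \<Rightarrow> real) \<Rightarrow> real \<Rightarrow> real \<Rightarrow> ('v, 'a) qtree pmf \<Rightarrow> bool" where
  "one_sided_tester V C w eps q D \<longleftrightarrow>
     (\<forall>T \<in> set_pmf D. \<forall>f. real (num_queries T f) \<le> q) \<and>
     (\<forall>f. satisfying V C f \<longrightarrow> (\<forall>T \<in> set_pmf D. accepts T f)) \<and>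
     (\<forall>f. eps_far V C w eps f \<longrightarrow> measure_pmf.prob D {T. \<not> accepts T f} \<ge> 2/3)"

definition ecsp_sublinear_testable_1s ::
  "'v itself \<Rightarrow> (nat \<times> 'a list set) set \<Rightarrow> bool" where
  "ecsp_sublinear_testable_1s _ Rels \<longleftrightarrow>
     (\<forall>eps. 0 < eps \<and> eps < 1 \<longrightarrow>
        (\<exists>q :: nat \<Rightarrow> real. q \<in> o[at_top](\<lambda>n. real n) \<and>
           (\<forall>(V :: 'v set) Vex C w. ecsp_instance Rels V Vex C w \<longrightarrow>
              (\<exists>D. one_sided_tester V C w eps (q (card V)) D))))"

definition csp_sublinear_testable_1s ::
  "'v itself \<Rightarrow> (nat \<times> 'a list set) set \<Rightarrow> bool" where
  "csp_sublinear_testable_1s _ Rels \<longleftrightarrow>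
     (\<forall>eps. 0 < eps \<and> eps < 1 \<longrightarrow>
        (\<exists>q :: nat \<Rightarrow> real. q \<in> o[at_top](\<lambda>n. real n) \<and>
           (\<forall>(V :: 'v set) C w. csp_instance Rels V C w \<longrightarrow>
              (\<exists>D. one_sided_tester V C w eps (q (card V)) D))))"

end

theory Submission
  imports Defs
begin


primrec qt :: "'v list \<Rightarrow> (('v \<Rightarrow> 'a) \<Rightarrow> bool) \<Rightarrow> ('v,'a) qtree" where
  "qt [] F = Leaf (F (\<lambda>_. undefined))"
| "qt (x#xs) F = Query x (\<lambda>a. qt xs (\<lambda>h. F (h(x := a))))"

lemma qt_accepts: "accepts (qt xs F) f = F (\<lambda>v. if v \<in> set xs then f v else undefined)"
proof (induction xs arbitrary: F)
  case Nil then show ?case by simp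
next
  case (Cons x xs)
  have "accepts (qt (x#xs) F) f = F ((\<lambda>v. if v \<in> set xs then f v else undefined)(x := f x))"
    using Cons by simp
  also have "(\<lambda>v. if v \<in> set xs then f v else undefined)(x := f x) = (\<lambda>v. if v \<in> set (x#xs) then f v else undefined)"
    by (auto simp: fun_eq_iff)
  finally show ?case .
qed

lemma qt_nq: "num_queries (qt xs F) f = length xs"
  by (induction xs arbitrary: F) auto

definition extends :: "('v list \<times> 'a list set) set \<Rightarrow> 'v set \<Rightarrow> ('v \<Rightarrow> 'a) \<Rightarrow> bool" where
  "extends C X f \<longleftrightarrow> (\<exists>g. (\<forall>v\<in>X. g v = f v) \<and> (\<forall>(s,R)\<in>C. map g s \<in> R))"

lemma extends_mono: "extends C X f \<Longrightarrow> Y \<subseteq> X \<Longrightarrow> extends C Y f"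
  unfolding extends_def by blast

lemma BP:
  assumes nu: "near_unanimity k nu" and pol: "polymorphism k nu Rels"
    and C: "\<forall>(s,R)\<in>C. (length s, R) \<in> Rels"
  shows "finite X \<Longrightarrow> (\<forall>Y\<subseteq>X. card Y \<le> k \<longrightarrow> extends C Y f) \<Longrightarrow> extends C X f"
proof (induction "card X" arbitrary: X rule: less_induct)
  case less
  show ?case
  proof (cases "card X \<le> k")
    case True then show ?thesis using less.prems by auto
  next
    case False
    obtain xs where xs: "set xs = X" "distinct xs" using finite_distinct_list[OF less.prems(1)] by blast
    define ys where "ys = take (Suc k) xs"
    have lxs: "length xs = card X" using xs distinct_card by metis
    have lys: "length ys = Suc k" using False lxs unfolding ys_def by simp
    have dys: "distinct ys" using xs unfolding ys_def by simp
    have sys: "set ys \<subseteq> X" using xs unfolding ys_def by (metis set_take_subset)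
    have "\<forall>i. \<exists>g. i < Suc k \<longrightarrow> (\<forall>v\<in>X - {ys!i}. g v = f v) \<and> (\<forall>(s,R)\<in>C. map g s \<in> R)"
    proof (intro allI)
      fix i
      show "\<exists>g. i < Suc k \<longrightarrow> (\<forall>v\<in>X - {ys!i}. g v = f v) \<and> (\<forall>(s,R)\<in>C. map g s \<in> R)"
      proof (cases "i < Suc k")
        case True
        have yi: "ys!i \<in> X" using sys True lys by (metis nth_mem subsetD)
        have "card (X - {ys!i}) < card X" using yi less.prems(1) by (meson card_Diff1_less)
        hence "extends C (X - {ys!i}) f" using less.hyps[of "X - {ys!i}"] less.prems by auto
        thus ?thesis unfolding extends_def by blast
      qed auto
    qed
    then obtain G where G: "\<And>i. i < Suc k \<Longrightarrow> (\<forall>v\<in>X - {ys!i}. G i v = f v) \<and> (\<forall>(s,R)\<in>C. map (G i) s \<in> R)"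
      by metis
    define g where "g v = nu (map (\<lambda>i. G i v) [0..<Suc k])" for v
    show ?thesis unfolding extends_def
    proof (intro exI conjI ballI)
      fix v assume vX: "v \<in> X"
      show "g v = f v"
      proof (cases "v \<in> set ys")
        case True
        then obtain j where j: "j < Suc k" "ys!j = v" by (metis in_set_conv_nth lys)
        have "map (\<lambda>i. G i v) [0..<Suc k] = (replicate (Suc k) (f v))[j := G j v]"
        proof (rule nth_equalityI)
          fix i assume "i < length (map (\<lambda>i. G i v) [0..<Suc k])"
          hence i: "i < Suc k" by simp
          show "map (\<lambda>i. G i v) [0..<Suc k] ! i = (replicate (Suc k) (f v))[j := G j v] ! i"
          proof (cases "i = j")
            case False
            have "ys ! i \<noteq> v" using False j dys i lys by (metis nth_eq_iff_index_eq)
            have "G i v = f v" using G[OF i] vX \<open>ys ! i \<noteq> v\<close> by blast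
            then show ?thesis using i False j by (simp del: upt_Suc replicate_Suc)
          qed (use i in \<open>simp del: upt_Suc replicate_Suc\<close>)
        qed (metis length_list_update length_map length_replicate length_upt diff_zero)
        then show ?thesis using nu j unfolding near_unanimity_def g_def by (simp del: upt_Suc replicate_Suc)
      next
        case False
        have "map (\<lambda>i. G i v) [0..<Suc k] = (replicate (Suc k) (f v))[0 := f v]"
        proof (rule nth_equalityI)
          fix i assume "i < length (map (\<lambda>i. G i v) [0..<Suc k])"
          hence i: "i < Suc k" by simp
          have "ys ! i \<noteq> v" using False i lys by (metis nth_mem)
          have "G i v = f v" using G[OF i] vX \<open>ys ! i \<noteq> v\<close> by blast
          then show "map (\<lambda>i. G i v) [0..<Suc k] ! i = (replicate (Suc k) (f v))[0 := f v] ! i"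
            using i by (simp del: upt_Suc replicate_Suc add: nth_list_update)
        qed (metis length_list_update length_map length_replicate length_upt diff_zero)
        then show ?thesis using nu unfolding near_unanimity_def g_def by (simp del: upt_Suc replicate_Suc)
      qed
    next
      fix sR assume sRC: "sR \<in> C"
      obtain s R where sRe: "sR = (s,R)" by (cases sR)
      have sR: "(s,R) \<in> C" using sRC sRe by simp
        define ts where "ts = map (\<lambda>i. map (G i) s) [0..<Suc k]"
        have "\<And>i. i < Suc k \<Longrightarrow> map (G i) s \<in> R" using G sR by fastforce
        hence "length ts = Suc k \<and> set ts \<subseteq> R" unfolding ts_def by (auto simp del: upt_Suc)
        hence "map (\<lambda>j. nu (map (\<lambda>t. t ! j) ts)) [0..<length s] \<in> R"
          using pol C sR unfolding polymorphism_def by fastforce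
        also have "map (\<lambda>j. nu (map (\<lambda>t. t ! j) ts)) [0..<length s] = map g s"
          by (rule nth_equalityI) (auto simp: ts_def g_def o_def)
        finally show "case sR of (s,R) \<Rightarrow> map g s \<in> R" using sRe by simp
    qed
  qed
qed



lemma hitting:
  assumes inst: "ecsp_instance Rels V Vex C w"
    and nu: "near_unanimity k nu" and pol: "polymorphism k nu Rels"
    and far: "eps_far V C w eps f"
    and U: "U \<subseteq> V"
    and hit: "\<And>Y. Y \<subseteq> V \<Longrightarrow> card Y \<le> k \<Longrightarrow> \<not> extends C Y f \<Longrightarrow> Y \<inter> U \<noteq> {}"
  shows "sum w U > eps"
proof -
  have fin: "finite V" and C: "\<forall>(s,R)\<in>C. (length s, R) \<in> Rels"
    and wn: "\<forall>v\<in>V. 0 \<le> w v"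
    using inst unfolding ecsp_instance_def by auto
  have "extends C (V - U) f"
  proof (rule BP[OF nu pol C])
    show "finite (V - U)" using fin by simp
    show "\<forall>Y\<subseteq>V - U. card Y \<le> k \<longrightarrow> extends C Y f"
      using hit by blast
  qed
  then obtain g where g1: "\<forall>v\<in>V - U. g v = f v" and g2: "\<forall>(s,R)\<in>C. map g s \<in> R"
    unfolding extends_def by blast
  have "satisfying V C g" unfolding satisfying_def using g2 by blast
  hence "wdist V w f g > eps" using far unfolding eps_far_def by blast
  moreover have "wdist V w f g \<le> sum w U"
    unfolding wdist_def
  proof (rule sum_mono2)
    show "finite U" using fin U finite_subset by blast
    show "{v \<in> V. f v \<noteq> g v} \<subseteq> U" using g1 by force
    fix b assume "b \<in> U - {v \<in> V. f v \<noteq> g v}"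
    then show "0 \<le> w b" using wn U by auto
  qed
  ultimately show ?thesis by simp
qed

lemma prob_pair_prod:
  "measure_pmf.prob (pair_pmf M N) {(x,y). P x \<and> Q y} =
     measure_pmf.prob M {x. P x} * measure_pmf.prob N {y. Q y}"
proof -
  have "measure_pmf.prob (pair_pmf M N) {(x,y). P x \<and> Q y} =
        measure_pmf.prob (pair_pmf M N) ({(x,y). P x \<and> Q y} \<inter> set_pmf (pair_pmf M N))"
    by (rule measure_Int_set_pmf[symmetric])
  also have "{(x,y). P x \<and> Q y} \<inter> set_pmf (pair_pmf M N) =
      ({x. P x} \<inter> set_pmf M) \<times> ({y. Q y} \<inter> set_pmf N)" by auto
  also have "measure_pmf.prob (pair_pmf M N) \<dots> =
      measure_pmf.prob M ({x. P x} \<inter> set_pmf M) * measure_pmf.prob N ({y. Q y} \<inter> set_pmf N)"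
    by (rule measure_pmf_prob_product)
       (auto intro: countable_subset[OF _ countable_set_pmf])
  also have "\<dots> = measure_pmf.prob M {x. P x} * measure_pmf.prob N {y. Q y}"
    by (simp add: measure_Int_set_pmf)
  finally show ?thesis .
qed

lemma prob_all_true:
  fixes \<rho> :: real
  assumes "0 \<le> \<rho>" "\<rho> \<le> 1" "finite Z"
  shows "measure_pmf.prob (Pi_pmf Z False (\<lambda>_. bernoulli_pmf \<rho>)) {c. \<not>(\<forall>v\<in>Z. c v)} = 1 - \<rho> ^ card Z"
proof -
  have "{c. \<not>(\<forall>v\<in>Z. c v)} = UNIV - Pi Z (\<lambda>_. {True})" by (auto simp: Pi_def)
  hence "measure_pmf.prob (Pi_pmf Z False (\<lambda>_. bernoulli_pmf \<rho>)) {c. \<not>(\<forall>v\<in>Z. c v)} =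
      1 - measure_pmf.prob (Pi_pmf Z False (\<lambda>_. bernoulli_pmf \<rho>)) (Pi Z (\<lambda>_. {True}))"
    using measure_pmf.prob_compl[of "Pi Z (\<lambda>_. {True})" "Pi_pmf Z False (\<lambda>_. bernoulli_pmf \<rho>)"] by simp
  also have "measure_pmf.prob (Pi_pmf Z False (\<lambda>_. bernoulli_pmf \<rho>)) (Pi Z (\<lambda>_. {True})) =
      (\<Prod>v\<in>Z. measure_pmf.prob (bernoulli_pmf \<rho>) {True})"
    using assms by (intro measure_Pi_pmf_Pi) auto
  also have "\<dots> = \<rho> ^ card Z" using assms by (simp add: measure_pmf_single)
  finally show ?thesis .
qed

lemma merge_ball: "A \<inter> Z = {} \<Longrightarrow> (\<forall>v\<in>A. (if v \<in> Z then f v else g v)) = (\<forall>v\<in>A. g v)"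
  by auto

lemma merge_ball2: "(\<forall>v\<in>Z. (if v \<in> Z then f v else g v)) = (\<forall>v\<in>Z. f v)"
  by auto

lemma blocks:
  fixes \<rho> :: real
  assumes r: "0 \<le> \<rho>" "\<rho> \<le> 1"
  shows "finite Ms \<Longrightarrow> finite A \<Longrightarrow> disjoint Ms \<Longrightarrow> \<Union>Ms \<subseteq> A \<Longrightarrow>
    measure_pmf.prob (Pi_pmf A False (\<lambda>_. bernoulli_pmf \<rho>)) {c. \<forall>Z\<in>Ms. \<not>(\<forall>v\<in>Z. c v)}
      = (\<Prod>Z\<in>Ms. 1 - \<rho> ^ card Z)"
proof (induction Ms arbitrary: A rule: finite_induct)
  case empty
  then show ?case by simp
next
  case (insert Z Ms)
  have ZA: "Z \<subseteq> A" using insert.prems by auto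
  have finZ: "finite Z" using ZA insert.prems(1) finite_subset by blast
  have dis: "Z' \<inter> Z = {}" if "Z' \<in> Ms" for Z'
  proof -
    have "Z' \<noteq> Z" using that insert.hyps(2) by blast
    hence "disjnt Z Z'" using insert.prems(2) that unfolding pairwise_def by blast
    then show ?thesis unfolding disjnt_def by blast
  qed
  have dMs: "disjoint Ms" using insert.prems(2) by (simp add: pairwise_insert)
  have MsA: "\<Union>Ms \<subseteq> A - Z" using insert.prems(3) dis by blast
  define h where "h = (\<lambda>(f,g) x. if x \<in> Z then f x else (g x :: bool))"
  let ?p = "\<lambda>B. Pi_pmf B False (\<lambda>_. bernoulli_pmf \<rho>)"
  have "?p A = ?p (Z \<union> (A - Z))" using ZA by (metis Un_Diff_cancel sup.absorb2)
  also have "\<dots> = map_pmf h (pair_pmf (?p Z) (?p (A - Z)))"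
    unfolding h_def using finZ insert.prems(1) by (intro Pi_pmf_union) auto
  finally have eq: "?p A = map_pmf h (pair_pmf (?p Z) (?p (A - Z)))" .
  have e3: "(\<forall>Z'\<in>Ms. \<not>(\<forall>v\<in>Z'. if v \<in> Z then f v else g v)) = (\<forall>Z'\<in>Ms. \<not>(\<forall>v\<in>Z'. g v))" for f g
  proof (rule ball_cong[OF refl])
    fix Z' assume "Z' \<in> Ms"
    then show "(\<not>(\<forall>v\<in>Z'. if v \<in> Z then f v else g v)) = (\<not>(\<forall>v\<in>Z'. g v))"
      using merge_ball[OF dis] by simp
  qed
  have pre: "h -` {c. \<forall>Z\<in>insert Z Ms. \<not>(\<forall>v\<in>Z. c v)} =
     {(f,g). \<not>(\<forall>v\<in>Z. f v) \<and> (\<forall>Z'\<in>Ms. \<not>(\<forall>v\<in>Z'. g v))}"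
  proof (rule set_eqI)
    fix x :: "('a \<Rightarrow> bool) \<times> ('a \<Rightarrow> bool)"
    obtain f g where x: "x = (f,g)" by (cases x)
    have hx: "h (f,g) = (\<lambda>v. if v \<in> Z then f v else g v)" by (simp add: h_def)
    show "x \<in> h -` {c. \<forall>Z\<in>insert Z Ms. \<not>(\<forall>v\<in>Z. c v)} \<longleftrightarrow>
          x \<in> {(f,g). \<not>(\<forall>v\<in>Z. f v) \<and> (\<forall>Z'\<in>Ms. \<not>(\<forall>v\<in>Z'. g v))}"
      unfolding x vimage_eq hx mem_Collect_eq ball_simps(7) e3 merge_ball2 apply simp using dis by blast
  qed
  have "measure_pmf.prob (?p A) {c. \<forall>Z\<in>insert Z Ms. \<not>(\<forall>v\<in>Z. c v)} =
     measure_pmf.prob (pair_pmf (?p Z) (?p (A - Z))) {(f,g). \<not>(\<forall>v\<in>Z. f v) \<and> (\<forall>Z'\<in>Ms. \<not>(\<forall>v\<in>Z'. g v))}"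
    unfolding eq measure_map_pmf pre ..
  also have "\<dots> = measure_pmf.prob (?p Z) {f. \<not>(\<forall>v\<in>Z. f v)} *
       measure_pmf.prob (?p (A - Z)) {g. \<forall>Z'\<in>Ms. \<not>(\<forall>v\<in>Z'. g v)}"
    by (rule prob_pair_prod)
  also have "measure_pmf.prob (?p Z) {f. \<not>(\<forall>v\<in>Z. f v)} = 1 - \<rho> ^ card Z"
    by (rule prob_all_true[OF r finZ])
  also have "measure_pmf.prob (?p (A - Z)) {g. \<forall>Z'\<in>Ms. \<not>(\<forall>v\<in>Z'. g v)} = (\<Prod>Z\<in>Ms. 1 - \<rho> ^ card Z)"
    using insert.prems(1) dMs MsA by (intro insert.IH) auto
  also have "(1 - \<rho> ^ card Z) * (\<Prod>Z\<in>Ms. 1 - \<rho> ^ card Z) = (\<Prod>Z\<in>insert Z Ms. 1 - \<rho> ^ card Z)"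
    using insert.hyps by simp
  finally show ?case .
qed

lemma markov_card:
  fixes \<rho> a :: real
  assumes r: "0 \<le> \<rho>" "\<rho> \<le> 1" and L: "finite L" and a: "a > 0"
  shows "measure_pmf.prob (Pi_pmf L False (\<lambda>_. bernoulli_pmf \<rho>)) {c. real (card {v\<in>L. c v}) \<ge> a}
     \<le> \<rho> * card L / a"
proof -
  let ?p = "Pi_pmf L False (\<lambda>_. bernoulli_pmf \<rho>)"
  let ?h = "\<lambda>b::bool. if b then 1 else (0::real)"
  have cs: "\<And>c. real (card {v\<in>L. c v}) = (\<Sum>v\<in>L. ?h (c v))"
    using L by (simp add: sum.If_cases Int_def)
  have finP: "finite (set_pmf ?p)" using L by (auto simp: set_Pi_pmf intro!: finite_PiE_dflt)
  have int: "integrable ?p (\<lambda>c. \<Sum>v\<in>L. ?h (c v))"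
    by (rule integrable_measure_pmf_finite[OF finP])
  have ex1: "measure_pmf.expectation ?p (\<lambda>c. ?h (c v)) = \<rho>" if v: "v \<in> L" for v
  proof -
    have "measure_pmf.expectation ?p (\<lambda>c. ?h (c v)) = measure_pmf.expectation (map_pmf (\<lambda>c. c v) ?p) ?h"
      by simp
    also have "map_pmf (\<lambda>c. c v) ?p = bernoulli_pmf \<rho>" by (subst Pi_pmf_component[OF L]) (simp add: v)
    finally show ?thesis using r by simp
  qed
  have ex: "measure_pmf.expectation ?p (\<lambda>c. \<Sum>v\<in>L. ?h (c v)) = \<rho> * card L"
  proof -
    have "measure_pmf.expectation ?p (\<lambda>c. \<Sum>v\<in>L. ?h (c v)) = (\<Sum>v\<in>L. measure_pmf.expectation ?p (\<lambda>c. ?h (c v)))"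
      by (rule Bochner_Integration.integral_sum) (rule integrable_measure_pmf_finite[OF finP])
    also have "\<dots> = (\<Sum>v\<in>L. \<rho>)" using ex1 by simp
    finally show ?thesis by simp
  qed
  have "measure_pmf.prob ?p {c \<in> space (measure_pmf ?p). (\<Sum>v\<in>L. ?h (c v)) \<ge> a}
       \<le> measure_pmf.expectation ?p (\<lambda>c. \<Sum>v\<in>L. ?h (c v)) / a"
    by (rule integral_Markov_inequality_measure[OF int _ _ a, where A = UNIV])
       (auto intro!: sum_nonneg)
  then show ?thesis using ex by (simp add: cs)
qed



lemma extends_cong: "(\<And>v. v \<in> X \<Longrightarrow> h v = f v) \<Longrightarrow> extends C X h = extends C X f"
  unfolding extends_def by auto

lemma exp_neg3: "exp (-3::real) \<le> 1/6"
proof -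
  have "exp (1::real) \<ge> 2" using exp_ge_add_one_self[of 1] by simp
  hence "exp (1::real) ^ 3 \<ge> 2^3" by (rule power_mono) simp
  moreover have "exp (3::real) = exp 1 ^ 3" using exp_of_nat_mult[of 3 "1::real"] by simp
  ultimately have "exp (3::real) \<ge> 8" by simp
  then show ?thesis by (simp add: exp_minus field_simps)
qed

lemma pow_bound:
  fixes x :: real
  assumes "0 \<le> x" "x \<le> 1" "x * real m \<ge> 3"
  shows "(1 - x) ^ m \<le> 1/6"
proof -
  have "(1 - x) ^ m \<le> exp (-x) ^ m"
    using assms exp_ge_add_one_self[of "-x"] by (intro power_mono) auto
  also have "\<dots> = exp (- (x * real m))" using exp_of_nat_mult[of m "-x"] by (simp add: mult.commute)
  also have "\<dots> \<le> exp (-3)" using assms by simp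
  also have "\<dots> \<le> 1/6" by (rule exp_neg3)
  finally show ?thesis .
qed

lemma rho_pow:
  fixes a :: real
  assumes "a > 0" "k \<ge> 1" "n > 0"
  shows "(a powr (1/real k) * real n powr (-1/(2*real k))) ^ k = a / sqrt (real n)"
proof -
  have p1: "a powr (1/real k) > 0" using assms by simp
  have "(a powr (1/real k)) ^ k = (a powr (1/real k)) powr real k"
    by (rule powr_realpow[OF p1, symmetric])
  also have "\<dots> = a" using assms by (simp add: powr_powr)
  finally have 1: "(a powr (1/real k)) ^ k = a" .
  have p2: "real n powr (-1/(2*real k)) > 0" using assms by simp
  have "(real n powr (-1/(2*real k))) ^ k = (real n powr (-1/(2*real k))) powr real k"
    by (rule powr_realpow[OF p2, symmetric])
  also have "\<dots> = real n powr (- (1/2))" using assms by (simp add: powr_powr)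
  also have "\<dots> = 1 / sqrt (real n)" by (simp add: powr_minus_divide powr_half_sqrt)
  finally have 2: "(real n powr (-1/(2*real k))) ^ k = 1 / sqrt (real n)" .
  show ?thesis unfolding power_mult_distrib 1 2 by simp
qed

lemma n_powr:
  assumes "n > 0"
  shows "real n * real n powr (-1/(2*real k)) = real n powr (1 - 1/(2*real k))"
proof -
  have "real n powr (1 + (-1/(2*real k))) = real n powr 1 * real n powr (-1/(2*real k))"
    by (rule powr_add)
  then show ?thesis using assms by simp
qed



lemma tester:
  fixes Rels :: "(nat \<times> 'a list set) set" and nu :: "'a list \<Rightarrow> 'a" and k :: nat and eps :: real
    and V Vex :: "'v set" and C :: "('v list \<times> 'a list set) set" and w :: "'v \<Rightarrow> real"
  assumes nu: "near_unanimity k nu" and pol: "polymorphism k nu Rels"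
    and k: "k \<ge> 1" and eps: "eps > 0"
    and inst: "ecsp_instance Rels V Vex C w"
  shows "\<exists>D. one_sided_tester V C w eps
     (sqrt (real (card V)) + 6 * ((3 * real k / eps) powr (1 / real k)) * real (card V) powr (1 - 1 / (2 * real k))) D"
proof -
  define n where "n = card V"
  define c0 where "c0 = (3 * real k / eps) powr (1 / real k)"
  define qn where "qn = sqrt (real n) + 6 * c0 * real n powr (1 - 1 / (2 * real k))"
  have finV: "finite V" and wn: "\<forall>v\<in>V. 0 \<le> w v" and wsum: "sum w V = 1"
    using inst unfolding ecsp_instance_def by auto
  have "V \<noteq> {}" using wsum by auto
  hence npos: "n > 0" using finV unfolding n_def by auto
  define \<theta> where "\<theta> = 1 / sqrt (real n)"
  have \<theta>pos: "\<theta> > 0" using npos unfolding \<theta>_def by simp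
  define H where "H = {v\<in>V. w v \<ge> \<theta>}"
  define L where "L = V - H"
  have finH: "finite H" and finL: "finite L" and HV: "H \<subseteq> V" and LV: "L \<subseteq> V"
    using finV unfolding H_def L_def by auto
  have c0pos: "c0 > 0" using eps k unfolding c0_def by simp
  define \<rho> where "\<rho> = min 1 (c0 * real n powr (-1 / (2 * real k)))"
  have \<rho>pos: "0 < \<rho>" and \<rho>1: "\<rho> \<le> 1" using c0pos npos unfolding \<rho>_def by auto
  have cardH: "real (card H) \<le> sqrt (real n)"
  proof -
    have "real (card H) * \<theta> = (\<Sum>v\<in>H. \<theta>)" by simp
    also have "\<dots> \<le> sum w H" by (rule sum_mono) (auto simp: H_def)
    also have "\<dots> \<le> sum w V" using finV HV wn by (intro sum_mono2) auto
    finally have "real (card H) * \<theta> \<le> 1" using wsum by simp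
    then show ?thesis using \<theta>pos npos unfolding \<theta>_def by (simp add: field_simps)
  qed
  have rho_le: "6 * real n * \<rho> \<le> 6 * c0 * real n powr (1 - 1 / (2 * real k))"
  proof -
    have "real n * \<rho> \<le> real n * (c0 * real n powr (-1 / (2 * real k)))"
      unfolding \<rho>_def by (intro mult_left_mono) auto
    also have "\<dots> = c0 * real n powr (1 - 1 / (2 * real k))"
      using n_powr[OF npos, of k] by (simp add: algebra_simps)
    finally show ?thesis by simp
  qed
  have qn_nonneg: "qn \<ge> 0" unfolding qn_def using c0pos by simp
  define S where "S c = H \<union> {v\<in>L. c v}" for c :: "'v \<Rightarrow> bool"
  have finS: "finite (S c)" and SV: "S c \<subseteq> V" for c
    using finH finL HV LV unfolding S_def by auto
  define lst where "lst X = (SOME xs. set xs = X \<and> distinct xs)" for X :: "'v set"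
  have lst: "set (lst X) = X \<and> distinct (lst X)" if "finite X" for X
    unfolding lst_def by (rule someI_ex) (use finite_distinct_list[OF that] in blast)
  define tree where "tree c = (if real (card (S c)) \<le> qn then qt (lst (S c)) (extends C (S c)) else Leaf True)" for c
  define P where "P = Pi_pmf L False (\<lambda>_. bernoulli_pmf \<rho>)"
  define D where "D = map_pmf tree P"
  have acc: "accepts (tree c) f \<longleftrightarrow> (real (card (S c)) \<le> qn \<longrightarrow> extends C (S c) f)" for c f
  proof -
    have "extends C (S c) (\<lambda>v. if v \<in> set (lst (S c)) then f v else undefined) = extends C (S c) f"
      by (rule extends_cong) (use lst[OF finS] in auto)
    then show ?thesis unfolding tree_def by (simp add: qt_accepts)
  qed
  have nq: "real (num_queries (tree c) f) \<le> qn" for c f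
  proof (cases "real (card (S c)) \<le> qn")
    case True
    have "length (lst (S c)) = card (S c)" using lst[OF finS] by (metis distinct_card)
    then show ?thesis using True unfolding tree_def by (simp add: qt_nq)
  qed (simp add: tree_def qn_nonneg)
  have part1: "\<forall>T\<in>set_pmf D. \<forall>f. real (num_queries T f) \<le> qn"
    unfolding D_def using nq by auto
  have part2: "\<forall>f. satisfying V C f \<longrightarrow> (\<forall>T\<in>set_pmf D. accepts T f)"
  proof (intro allI impI ballI)
    fix f T assume sat: "satisfying V C f" and T: "T \<in> set_pmf D"
    then obtain c where Tc: "T = tree c" unfolding D_def by auto
    have "extends C V f" using sat unfolding satisfying_def extends_def by metis
    hence "extends C (S c) f" using SV extends_mono by blast
    then show "accepts T f" using Tc acc by simp
  qed
  have part3: "measure_pmf.prob D {T. \<not> accepts T f} \<ge> 2/3" if far: "eps_far V C w eps f" for f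
  proof -
    define B where "B = {Y. Y \<subseteq> V \<and> card Y \<le> k \<and> \<not> extends C Y f}"
    define Big where "Big = {c. \<not> real (card (S c)) \<le> qn}"
    define Miss where "Miss = {c. \<not>(\<exists>Y\<in>B. Y \<subseteq> S c)}"
    define R where "R = {c. \<not> accepts (tree c) f}"
    have probD: "measure_pmf.prob D {T. \<not> accepts T f} = measure_pmf.prob P R"
      unfolding D_def R_def by simp
    have sub: "UNIV - R \<subseteq> Big \<union> Miss"
    proof
      fix c assume "c \<in> UNIV - R"
      hence a: "accepts (tree c) f" unfolding R_def by simp
      show "c \<in> Big \<union> Miss"
      proof (rule ccontr)
        assume "c \<notin> Big \<union> Miss"
        then obtain Y where "Y \<in> B" "Y \<subseteq> S c" "real (card (S c)) \<le> qn"
          unfolding Big_def Miss_def by auto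
        then show False using a acc extends_mono unfolding B_def by blast
      qed
    qed
    have pBig: "measure_pmf.prob P Big \<le> 1/6"
    proof -
      have "Big \<subseteq> {c. 6 * real n * \<rho> \<le> real (card {v\<in>L. c v})}"
      proof
        fix c assume "c \<in> Big"
        hence big: "real (card (S c)) > qn" unfolding Big_def by simp
        have "card (S c) \<le> card H + card {v\<in>L. c v}" unfolding S_def by (rule card_Un_le)
        hence "real (card (S c)) \<le> real (card H) + real (card {v\<in>L. c v})" by linarith
        then show "c \<in> {c. 6 * real n * \<rho> \<le> real (card {v\<in>L. c v})}"
          using big cardH rho_le unfolding qn_def by simp
      qed
      hence "measure_pmf.prob P Big \<le> measure_pmf.prob P {c. 6 * real n * \<rho> \<le> real (card {v\<in>L. c v})}"
        by (intro measure_pmf.finite_measure_mono) auto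
      also have "\<dots> \<le> \<rho> * card L / (6 * real n * \<rho>)"
        unfolding P_def using \<rho>pos \<rho>1 finL npos by (intro markov_card) auto
      also have "\<dots> \<le> 1/6"
      proof -
        have "card L \<le> n" unfolding n_def using LV finV by (rule card_mono[rotated])
        then show ?thesis using \<rho>pos npos by (simp add: field_simps)
      qed
      finally show ?thesis .
    qed
    have pMiss: "measure_pmf.prob P Miss \<le> 1/6"
    proof (cases "\<exists>Y\<in>B. Y \<inter> L = {}")
      case True
      then obtain Y where Y: "Y \<in> B" "Y \<inter> L = {}" by blast
      have "Y \<subseteq> H" using Y unfolding B_def L_def by auto
      hence "Miss = {}" using Y unfolding Miss_def S_def by auto
      then show ?thesis by simp
    next
      case False
      hence nonemp: "\<And>Y. Y \<in> B \<Longrightarrow> Y \<inter> L \<noteq> {}" by blast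
      have "B \<subseteq> Pow V" unfolding B_def by auto
      hence finB: "finite B" using finV by (meson finite_Pow_iff finite_subset)
      define Fam where "Fam = {M. M \<subseteq> B \<and> (\<forall>Y\<in>M. \<forall>Y'\<in>M. Y \<noteq> Y' \<longrightarrow> Y \<inter> L \<inter> Y' = {})}"
      have "Fam \<subseteq> Pow B" unfolding Fam_def by auto
      hence finFam: "finite Fam" using finB by (meson finite_Pow_iff finite_subset)
      have "{} \<in> Fam" unfolding Fam_def by simp
      hence ne: "card ` Fam \<noteq> {}" by blast
      obtain M where MF: "M \<in> Fam" and Mmax: "card M = Max (card ` Fam)"
        using Max_in[OF finite_imageI[OF finFam] ne] by auto
      have MB: "M \<subseteq> B" using MF unfolding Fam_def by simp
      have finM: "finite M" using finB MB finite_subset by blast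
      have maxl: "\<exists>Y'\<in>M. Y \<inter> L \<inter> Y' \<noteq> {}" if YB: "Y \<in> B" for Y
      proof (rule ccontr)
        assume "\<not> (\<exists>Y'\<in>M. Y \<inter> L \<inter> Y' \<noteq> {})"
        hence dis: "\<forall>Y'\<in>M. Y \<inter> L \<inter> Y' = {}" by blast
        have YM: "Y \<notin> M" using dis nonemp[OF YB] by blast
        have sym: "\<forall>Y'\<in>M. Y' \<inter> L \<inter> Y = {}" using dis by blast
        have "insert Y M \<in> Fam" unfolding Fam_def
        proof (intro CollectI conjI ballI impI)
          show "insert Y M \<subseteq> B" using MB YB by auto
          fix Y1 Y2 assume a: "Y1 \<in> insert Y M" "Y2 \<in> insert Y M" "Y1 \<noteq> Y2"
          then consider "Y1 = Y" "Y2 \<in> M" | "Y1 \<in> M" "Y2 = Y" | "Y1 \<in> M" "Y2 \<in> M" by blast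
          then show "Y1 \<inter> L \<inter> Y2 = {}"
          proof cases
            case 1 then show ?thesis using dis by simp
          next
            case 2 then show ?thesis using sym by simp
          next
            case 3 then show ?thesis using MF a(3) unfolding Fam_def by simp
          qed
        qed
        hence "card (insert Y M) \<le> card M" using Mmax finFam by simp
        then show False using YM finM by simp
      qed
      define Ms where "Ms = (\<lambda>Y. Y \<inter> L) ` M"
      define U where "U = \<Union>Ms"
      have UV: "U \<subseteq> V" unfolding U_def Ms_def using LV by auto
      have hitU: "Y \<inter> U \<noteq> {}" if "Y \<subseteq> V" "card Y \<le> k" "\<not> extends C Y f" for Y
      proof -
        have "Y \<in> B" using that unfolding B_def by simp
        then obtain Y' where "Y' \<in> M" "Y \<inter> L \<inter> Y' \<noteq> {}" using maxl by blast
        then show ?thesis unfolding U_def Ms_def by blast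
      qed
      have wU: "sum w U > eps" by (rule hitting[OF inst nu pol far UV hitU])
      have finMs: "finite Ms" unfolding Ms_def using finM by simp
      have disjMs: "\<forall>A1\<in>Ms. \<forall>A2\<in>Ms. A1 \<noteq> A2 \<longrightarrow> A1 \<inter> A2 = {}"
      proof (intro ballI impI)
        fix A1 A2 assume a: "A1 \<in> Ms" "A2 \<in> Ms" "A1 \<noteq> A2"
        then obtain Y1 Y2 where Y: "Y1 \<in> M" "Y2 \<in> M" "A1 = Y1 \<inter> L" "A2 = Y2 \<inter> L"
          unfolding Ms_def by blast
        hence "Y1 \<noteq> Y2" using a(3) by blast
        hence "Y1 \<inter> L \<inter> Y2 = {}" using MF Y unfolding Fam_def by simp
        then show "A1 \<inter> A2 = {}" using Y by blast
      qed
      have disjMs': "disjoint Ms" using disjMs unfolding pairwise_def disjnt_def by blast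
      have finZ: "\<forall>Z\<in>Ms. finite Z" unfolding Ms_def using finL by auto
      have MsL: "\<Union>Ms \<subseteq> L" unfolding Ms_def by auto
      have cardZ: "card Z \<le> k" if ZMs: "Z \<in> Ms" for Z
      proof -
        obtain Y where "Y \<in> M" "Z = Y \<inter> L" using ZMs unfolding Ms_def by blast
        moreover have "Y \<subseteq> V" "card Y \<le> k" using \<open>Y \<in> M\<close> MB unfolding B_def by auto
        ultimately show ?thesis using finV by (meson card_mono finite_subset inf_le1 le_trans)
      qed
      have wZ: "sum w Z \<le> real k * \<theta>" if "Z \<in> Ms" for Z
      proof -
        have "sum w Z \<le> (\<Sum>v\<in>Z. \<theta>)"
          using that unfolding Ms_def L_def H_def by (intro sum_mono) auto
        also have "\<dots> = real (card Z) * \<theta>" by simp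
        also have "\<dots> \<le> real k * \<theta>" using cardZ[OF that] \<theta>pos by simp
        finally show ?thesis .
      qed
      have "sum w U = (\<Sum>Z\<in>Ms. sum w Z)"
        unfolding U_def using sum.Union_disjoint[OF finZ disjMs] by simp
      also have "\<dots> \<le> (\<Sum>Z\<in>Ms. real k * \<theta>)" using wZ by (rule sum_mono)
      also have "\<dots> = real (card Ms) * real k * \<theta>" by simp
      finally have mbig: "eps < real (card Ms) * real k * \<theta>" using wU by simp
      have MissSub: "Miss \<subseteq> {c. \<forall>Z\<in>Ms. \<not>(\<forall>v\<in>Z. c v)}"
      proof (intro subsetI CollectI ballI notI)
        fix c Z assume cM: "c \<in> Miss" and Z: "Z \<in> Ms" and allc: "\<forall>v\<in>Z. c v"
        obtain Y where Y: "Y \<in> M" "Z = Y \<inter> L" using Z unfolding Ms_def by blast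
        have "Y \<subseteq> V" using Y MB unfolding B_def by auto
        hence "Y \<subseteq> S c" using allc Y unfolding S_def L_def by auto
        then show False using cM Y MB unfolding Miss_def by blast
      qed
      have "measure_pmf.prob P Miss \<le> measure_pmf.prob P {c. \<forall>Z\<in>Ms. \<not>(\<forall>v\<in>Z. c v)}"
        using MissSub by (intro measure_pmf.finite_measure_mono) auto
      also have "\<dots> = (\<Prod>Z\<in>Ms. 1 - \<rho> ^ card Z)"
        unfolding P_def using \<rho>pos \<rho>1 finMs finL disjMs' MsL by (intro blocks) auto
      also have "\<dots> \<le> (\<Prod>Z\<in>Ms. 1 - \<rho> ^ k)"
      proof (rule prod_mono)
        fix Z assume "Z \<in> Ms"
        have "\<rho> ^ k \<le> \<rho> ^ card Z" using cardZ[OF \<open>Z \<in> Ms\<close>] \<rho>pos \<rho>1 by (intro power_decreasing) auto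
        moreover have "\<rho> ^ card Z \<le> 1" using \<rho>pos \<rho>1 by (simp add: power_le_one)
        ultimately show "0 \<le> 1 - \<rho> ^ card Z \<and> 1 - \<rho> ^ card Z \<le> 1 - \<rho> ^ k" by simp
      qed
      also have "\<dots> = (1 - \<rho> ^ k) ^ card Ms" by simp
      also have "\<dots> \<le> 1/6"
      proof (cases "\<rho> = 1")
        case True
        have "card Ms \<noteq> 0"
        proof
          assume "card Ms = 0"
          then show False using mbig eps by simp
        qed
        then show ?thesis using True by (simp add: zero_power)
      next
        case False
        hence \<rho>eq: "\<rho> = c0 * real n powr (-1 / (2 * real k))" unfolding \<rho>_def by (auto simp: min_def split: if_splits)
        have "\<rho> ^ k = (3 * real k / eps) / sqrt (real n)"
          unfolding \<rho>eq c0_def using eps k npos by (intro rho_pow) auto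
        hence \<rho>k: "\<rho> ^ k = 3 * real k * \<theta> / eps" unfolding \<theta>_def by simp
        have "\<rho> ^ k * real (card Ms) = 3 * (real (card Ms) * real k * \<theta>) / eps"
          unfolding \<rho>k by (simp add: field_simps)
        also have "\<dots> \<ge> 3" using mbig eps by (simp add: field_simps)
        finally have "\<rho> ^ k * real (card Ms) \<ge> 3" .
        then show ?thesis using \<rho>pos \<rho>1 by (intro pow_bound) (auto simp: power_le_one)
      qed
      finally show ?thesis .
    qed
    have "measure_pmf.prob P (UNIV - R) \<le> measure_pmf.prob P (Big \<union> Miss)"
      using sub by (intro measure_pmf.finite_measure_mono) auto
    also have "\<dots> \<le> measure_pmf.prob P Big + measure_pmf.prob P Miss"
      by (intro measure_Un_le) auto
    finally have "measure_pmf.prob P (UNIV - R) \<le> 1/3" using pBig pMiss by simp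
    moreover have "measure_pmf.prob P (UNIV - R) = 1 - measure_pmf.prob P R"
      using measure_pmf.prob_compl[of R P] by simp
    ultimately show ?thesis using probD by simp
  qed
  have "one_sided_tester V C w eps qn D"
    unfolding one_sided_tester_def using part1 part2 part3 by blast
  then show ?thesis unfolding qn_def n_def c0_def by blast
qed


lemma asym:
  fixes k :: nat and c :: real
  assumes "k \<ge> 1"
  shows "(\<lambda>n::nat. sqrt (real n) + c * real n powr (1 - 1/(2*real k))) \<in> o(\<lambda>n. real n)"
proof -
  have F: "filterlim (\<lambda>n::nat. real n) at_top at_top" by (rule filterlim_real_sequentially)
  have nb: "(at_top :: nat filter) \<noteq> bot" by simp
  have s: "(\<lambda>n::nat. sqrt (real n)) = (\<lambda>n. real n powr (1/2))" by (simp add: powr_half_sqrt)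
  have "(\<lambda>n::nat. real n powr (1/2)) \<in> o(\<lambda>n. real n powr 1)"
    using powr_smallo_iff[OF F nb, of "1/2" 1] by simp
  hence a: "(\<lambda>n::nat. sqrt (real n)) \<in> o(\<lambda>n. real n)" unfolding s by simp
  have "1 - 1/(2*real k) < 1" using assms by simp
  hence "(\<lambda>n::nat. real n powr (1 - 1/(2*real k))) \<in> o(\<lambda>n. real n powr 1)"
    using powr_smallo_iff[OF F nb, of "1 - 1/(2*real k)" 1] by simp
  hence b0: "(\<lambda>n::nat. real n powr (1 - 1/(2*real k))) \<in> o(\<lambda>n. real n)" by simp
  have b: "(\<lambda>n::nat. c * real n powr (1 - 1/(2*real k))) \<in> o(\<lambda>n. real n)"
    using b0 by (cases "c = 0") auto
  show ?thesis using sum_in_smallo(1)[OF a b] by simp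
qed

theorem mainTheorem12:
  fixes Rels :: "(nat \<times> ('a::finite) list set) set"
    and nu :: "'a list \<Rightarrow> 'a"
    and k :: nat
  assumes "rel_structure Rels"
    and "k \<ge> 2"
    and "near_unanimity k nu"
    and "polymorphism k nu Rels"
  shows "csp_sublinear_testable_1s TYPE('v) Rels \<and> ecsp_sublinear_testable_1s TYPE('v) Rels"
proof -
  have k1: "k \<ge> 1" using assms(2) by simp
  have main: "\<exists>q :: nat \<Rightarrow> real. q \<in> o[at_top](\<lambda>n. real n) \<and>
           (\<forall>(V :: 'v set) Vex C w. ecsp_instance Rels V Vex C w \<longrightarrow>
              (\<exists>D. one_sided_tester V C w eps (q (card V)) D))" if e: "0 < eps" for eps :: real
  proof -
    define c0 where "c0 = (3 * real k / eps) powr (1 / real k)"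
    define q where "q = (\<lambda>n::nat. sqrt (real n) + (6 * c0) * real n powr (1 - 1 / (2 * real k)))"
    have "q \<in> o(\<lambda>n. real n)" unfolding q_def by (rule asym[OF k1])
    moreover have "\<forall>(V :: 'v set) Vex C w. ecsp_instance Rels V Vex C w \<longrightarrow>
              (\<exists>D. one_sided_tester V C w eps (q (card V)) D)"
      unfolding q_def c0_def using tester[OF assms(3) assms(4) k1 e] by blast
    ultimately show ?thesis by blast
  qed
  have ecsp: "ecsp_sublinear_testable_1s TYPE('v) Rels"
    unfolding ecsp_sublinear_testable_1s_def using main by blast
  have csp: "csp_sublinear_testable_1s TYPE('v) Rels"
    unfolding csp_sublinear_testable_1s_def csp_instance_def
  proof (intro allI impI)
    fix eps :: real assume "0 < eps \<and> eps < 1"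
    then obtain q :: "nat \<Rightarrow> real" where q: "q \<in> o[at_top](\<lambda>n. real n)"
      "\<forall>(V :: 'v set) Vex C w. ecsp_instance Rels V Vex C w \<longrightarrow> (\<exists>D. one_sided_tester V C w eps (q (card V)) D)"
      using main by blast
    then show "\<exists>q :: nat \<Rightarrow> real. q \<in> o[at_top](\<lambda>n. real n) \<and>
           (\<forall>(V :: 'v set) C w. ecsp_instance Rels V {} C w \<longrightarrow>
              (\<exists>D. one_sided_tester V C w eps (q (card V)) D))" by blast
  qed
  show ?thesis using ecsp csp by blast
qed

end
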